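(* Let $\Sigma$ be a one-sided subshift of finite type and let $\mathbf B,\mathbf B'$ be Bowen quasicocycles on $\Sigma$. Then $\mathbf B\sim\mathbf B'$ if and only if $\mu_{\mathbf a}(\mathbf B)=\mu_{\mathbf a}(\mathbf B')$ for every periodic word $\mathbf a$.
   Context: $\Sigma=\{(x_n)_{n\ge0}:R_{x_nx_{n+1}}=1\}$ with $R$ an irreducible aperiodic $0/1$ matrix on the alphabet $\{1,\dots,d\}$, $\tau$ the shift, $[x]_n$ the length-$n$ cylinder of $x$. For $B:\Sigma\to\mathbb R$, $\mathrm{var}_n(B)=\sup\{|B(x)-B(y)|:[x]_n=[y]_n\}$. A (Bowen) quasicocycle is a sequence $\mathbf B=(B_n)_{n\ge1}$ of bounded Borel functions with $\sup_{n,m}\sup_x|B_{n+m}(x)-B_n(x)-B_m(\tau^nx)|<\infty$ and $\sup_n\mathrm{var}_n(B_n)<\infty$. $\mathbf B\sim\mathbf B'$ (cohomologous) if $\sup_n\|B_n-B'_n\|_\infty<\infty$. For $\mu$ a $\tau$-invariant probability, $\mu(\mathbf B)=\lim_n\frac1n\int B_n\,d\mu$. A finite allowed word $\mathbf a=a_1\cdots a_n$ is periodic if $R_{a_na_1}=1$; then $\mathbf a\mathbf a\mathbf a\cdots$ is a periodic point of period $n$ and $\mu_{\mathbf a}$ is the invariant probability equidistributed on its orbit. *)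

theory Defs
  imports "HOL-Analysis.Analysis"
begin

fun mpow :: "nat \<Rightarrow> (nat \<Rightarrow> nat \<Rightarrow> nat) \<Rightarrow> nat \<Rightarrow> nat \<Rightarrow> nat \<Rightarrow> nat" where
  "mpow d R 0 i j = (if i = j then 1 else 0)"
| "mpow d R (Suc n) i j = (\<Sum>k\<in>{1..d}. mpow d R n i k * R k j)"

definition zero_one_matrix :: "nat \<Rightarrow> (nat \<Rightarrow> nat \<Rightarrow> nat) \<Rightarrow> bool" where
  "zero_one_matrix d R \<longleftrightarrow> (\<forall>i\<in>{1..d}. \<forall>j\<in>{1..d}. R i j \<in> {0, 1})"

definition irreducible_mat :: "nat \<Rightarrow> (nat \<Rightarrow> nat \<Rightarrow> nat) \<Rightarrow> bool" where
  "irreducible_mat d R \<longleftrightarrow> (\<forall>i\<in>{1..d}. \<forall>j\<in>{1..d}. \<exists>n>0. mpow d R n i j > 0)"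

definition aperiodic_mat :: "nat \<Rightarrow> (nat \<Rightarrow> nat \<Rightarrow> nat) \<Rightarrow> bool" where
  "aperiodic_mat d R \<longleftrightarrow> (\<forall>i\<in>{1..d}. Gcd {n. n > 0 \<and> mpow d R n i i > 0} = 1)"

definition SFT :: "nat \<Rightarrow> (nat \<Rightarrow> nat \<Rightarrow> nat) \<Rightarrow> (nat \<Rightarrow> nat) set" where
  "SFT d R = {x. (\<forall>n. x n \<in> {1..d}) \<and> (\<forall>n. R (x n) (x (Suc n)) = 1)}"

definition shift :: "(nat \<Rightarrow> nat) \<Rightarrow> (nat \<Rightarrow> nat)" where
  "shift x = (\<lambda>n. x (Suc n))"

definition bowen_quasicocycle :: "nat \<Rightarrow> (nat \<Rightarrow> nat \<Rightarrow> nat) \<Rightarrow> (nat \<Rightarrow> (nat \<Rightarrow> nat) \<Rightarrow> real) \<Rightarrow> bool" where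
  "bowen_quasicocycle d R B \<longleftrightarrow>
     (\<forall>n\<ge>1. B n \<in> borel_measurable (restrict_space borel (SFT d R))) \<and>
     (\<forall>n\<ge>1. \<exists>M. \<forall>x\<in>SFT d R. \<bar>B n x\<bar> \<le> M) \<and>
     (\<exists>C. \<forall>n\<ge>1. \<forall>m\<ge>1. \<forall>x\<in>SFT d R. \<bar>B (n + m) x - B n x - B m ((shift ^^ n) x)\<bar> \<le> C) \<and>
     (\<exists>C. \<forall>n\<ge>1. \<forall>x\<in>SFT d R. \<forall>y\<in>SFT d R. (\<forall>k<n. x k = y k) \<longrightarrow> \<bar>B n x - B n y\<bar> \<le> C)"

definition cohomologous :: "nat \<Rightarrow> (nat \<Rightarrow> nat \<Rightarrow> nat) \<Rightarrow> (nat \<Rightarrow> (nat \<Rightarrow> nat) \<Rightarrow> real) \<Rightarrow> (nat \<Rightarrow> (nat \<Rightarrow> nat) \<Rightarrow> real) \<Rightarrow> bool" where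
  "cohomologous d R B B' \<longleftrightarrow> (\<exists>C. \<forall>n\<ge>1. \<forall>x\<in>SFT d R. \<bar>B n x - B' n x\<bar> \<le> C)"

definition periodic_word :: "nat \<Rightarrow> (nat \<Rightarrow> nat \<Rightarrow> nat) \<Rightarrow> nat list \<Rightarrow> bool" where
  "periodic_word d R a \<longleftrightarrow> a \<noteq> [] \<and> set a \<subseteq> {1..d} \<and>
     (\<forall>i. Suc i < length a \<longrightarrow> R (a ! i) (a ! Suc i) = 1) \<and> R (last a) (hd a) = 1"

definition periodic_point :: "nat list \<Rightarrow> (nat \<Rightarrow> nat)" where
  "periodic_point a = (\<lambda>n. a ! (n mod length a))"

text \<open>Integral against the invariant probability equidistributed on the orbit of aaa...\<close>
definition orbit_integral :: "nat list \<Rightarrow> ((nat \<Rightarrow> nat) \<Rightarrow> real) \<Rightarrow> real" where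
  "orbit_integral a f = (\<Sum>k<length a. f ((shift ^^ k) (periodic_point a))) / real (length a)"

definition periodic_average :: "nat list \<Rightarrow> (nat \<Rightarrow> (nat \<Rightarrow> nat) \<Rightarrow> real) \<Rightarrow> real" where
  "periodic_average a B = lim (\<lambda>n. orbit_integral a (B n) / real n)"

end

theory Submission
  imports Defs
begin

lemma quasi_add_lim:
  fixes f :: "nat \<Rightarrow> real"
  assumes q: "\<And>n m. n \<ge> 1 \<Longrightarrow> m \<ge> 1 \<Longrightarrow> \<bar>f (n+m) - f n - f m\<bar> \<le> C"
  shows "\<exists>l. (\<lambda>n. f n / real n) \<longlonglongrightarrow> l \<and> (\<forall>n\<ge>1. \<bar>f n - real n * l\<bar> \<le> C)"
proof -
  have C0: "C \<ge> 0" using q[of 1 1] by simp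
  have mult: "\<bar>f (n*k) - real k * f n\<bar> \<le> (real k - 1) * C" if "n\<ge>1" "k\<ge>1" for n k
    using that(2)
  proof (induction k rule: nat_induct_at_least)
    case base then show ?case by simp
  next
    case (Suc k)
    have "n*k \<ge> 1" using Suc.hyps that(1) by simp
    then have "\<bar>f (n*k + n) - f (n*k) - f n\<bar> \<le> C" using q that(1) by blast
    moreover have "n * Suc k = n*k + n" by simp
    ultimately show ?case using Suc.IH by (simp add: algebra_simps abs_le_iff) linarith
  qed
  have half: "\<bar>f (n*m) / real (n*m) - f n / real n\<bar> \<le> C / real n" if "n\<ge>1" "m\<ge>1" for n m
  proof -
    have pos: "real n > 0" "real m > 0" using that by auto
    have "f (n*m) / real (n*m) - f n / real n = (f (n*m) - real m * f n) / (real n * real m)"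
      using pos by (simp add: field_simps)
    also have "\<bar>\<dots>\<bar> = \<bar>f (n*m) - real m * f n\<bar> / (real n * real m)" unfolding abs_divide using pos by simp
    also have "\<dots> \<le> ((real m - 1) * C) / (real n * real m)"
      using mult[OF that] pos by (intro divide_right_mono) auto
    also have "\<dots> \<le> (real m * C) / (real n * real m)"
      using pos C0 by (intro divide_right_mono) (auto simp: algebra_simps)
    also have "\<dots> = C / real n" using pos by simp
    finally show ?thesis .
  qed
  have cau: "\<bar>f n / real n - f m / real m\<bar> \<le> C / real n + C / real m" if "n\<ge>1" "m\<ge>1" for n m
    using half[OF that] half[OF that(2,1)] by (simp add: mult.commute abs_le_iff)
  have "Cauchy (\<lambda>n. f n / real n)"
  proof (rule metric_CauchyI)
    fix e :: real assume e: "e > 0"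
    define N where "N = nat \<lceil>2*C/e\<rceil> + 1"
    have N1: "N \<ge> 1" by (simp add: N_def)
    have "2*C/e < real N" unfolding N_def by linarith
    then have NC: "2*C / real N < e" using e N1 by (simp add: field_simps)
    show "\<exists>M. \<forall>m\<ge>M. \<forall>n\<ge>M. dist (f m / real m) (f n / real n) < e"
    proof (intro exI allI impI)
      fix m n assume mn: "m \<ge> N" "n \<ge> N"
      have "C / real m \<le> C / real N" "C / real n \<le> C / real N"
        using mn N1 C0 by (auto intro!: divide_left_mono)
      then show "dist (f m / real m) (f n / real n) < e"
        using cau[of m n] mn N1 NC by (simp add: dist_real_def)
    qed
  qed
  then obtain l where l: "(\<lambda>n. f n / real n) \<longlonglongrightarrow> l"
    using Cauchy_convergent_iff convergent_def by blast
  have "\<bar>f n - real n * l\<bar> \<le> C" if n: "n \<ge> 1" for n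
  proof -
    have sm: "strict_mono (\<lambda>k. n * k)" using n by (simp add: strict_mono_def)
    have "((\<lambda>n. f n / real n) \<circ> (\<lambda>k. n*k)) \<longlonglongrightarrow> l" using LIMSEQ_subseq_LIMSEQ[OF l sm] .
    then have "(\<lambda>k. \<bar>f (n*k) / real (n*k) - f n / real n\<bar>) \<longlonglongrightarrow> \<bar>l - f n / real n\<bar>"
      by (intro tendsto_intros) (simp add: o_def)
    moreover have "\<exists>N. \<forall>k\<ge>N. \<bar>f (n*k) / real (n*k) - f n / real n\<bar> \<le> C / real n"
      using half[OF n] by (intro exI[of _ 1]) auto
    ultimately have "\<bar>l - f n / real n\<bar> \<le> C / real n" by (rule LIMSEQ_le_const2)
    then have "real n * \<bar>l - f n / real n\<bar> \<le> C" using n by (simp add: field_simps)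
    moreover have "real n * \<bar>l - f n / real n\<bar> = \<bar>f n - real n * l\<bar>"
    proof -
      have "real n * (l - f n / real n) = real n * l - f n" using n by (simp add: field_simps)
      then have "real n * \<bar>l - f n / real n\<bar> = \<bar>real n * l - f n\<bar>" by (metis abs_mult abs_of_nat)
      then show ?thesis by simp
    qed
    ultimately show ?thesis by simp
  qed
  then show ?thesis using l by blast
qed

lemma shift_pow: "(shift ^^ k) x = (\<lambda>j. x (j + k))"
  by (induction k) (auto simp: shift_def)

lemma SFT_shift: "x \<in> SFT d R \<Longrightarrow> (shift ^^ k) x \<in> SFT d R"
  unfolding SFT_def shift_pow by auto

lemma pw_iff: "periodic_word d R a \<longleftrightarrow> a \<noteq> [] \<and>
   (\<forall>i<length a. a!i \<in> {1..d} \<and> R (a!i) (a!(Suc i mod length a)) = 1)"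
proof
  assume pw: "periodic_word d R a"
  then have ne: "a \<noteq> []" and st: "set a \<subseteq> {1..d}"
    and cons: "\<And>i. Suc i < length a \<Longrightarrow> R (a ! i) (a ! Suc i) = 1"
    and lh: "R (last a) (hd a) = 1" unfolding periodic_word_def by auto
  have "a!i \<in> {1..d} \<and> R (a!i) (a!(Suc i mod length a)) = 1" if i: "i < length a" for i
  proof -
    have "a!i \<in> {1..d}" using st i nth_mem by blast
    moreover have "R (a!i) (a!(Suc i mod length a)) = 1"
    proof (cases "Suc i < length a")
      case True then show ?thesis using cons by simp
    next
      case False
      then have "Suc i = length a" using i by simp
      then have "i = length a - 1" "Suc i mod length a = 0" by auto
      then show ?thesis using lh ne by (simp add: last_conv_nth hd_conv_nth)
    qed
    ultimately show ?thesis by blast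
  qed
  then show "a \<noteq> [] \<and> (\<forall>i<length a. a!i \<in> {1..d} \<and> R (a!i) (a!(Suc i mod length a)) = 1)"
    using ne by blast
next
  assume h: "a \<noteq> [] \<and> (\<forall>i<length a. a!i \<in> {1..d} \<and> R (a!i) (a!(Suc i mod length a)) = 1)"
  then have ne: "a \<noteq> []" by blast
  have "set a \<subseteq> {1..d}" using h by (auto simp: in_set_conv_nth)
  moreover have "R (a ! i) (a ! Suc i) = 1" if "Suc i < length a" for i
    using h that by (metis Suc_lessD mod_less)
  moreover have "R (last a) (hd a) = 1"
  proof -
    have "length a - 1 < length a" "Suc (length a - 1) mod length a = 0" using ne by auto
    then show ?thesis using h ne by (metis last_conv_nth hd_conv_nth)
  qed
  ultimately show "periodic_word d R a" unfolding periodic_word_def using ne by blast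
qed

lemma pp_SFT: assumes "periodic_word d R a" shows "periodic_point a \<in> SFT d R"
proof -
  have h: "a \<noteq> []" "\<And>i. i<length a \<Longrightarrow> a!i \<in> {1..d} \<and> R (a!i) (a!(Suc i mod length a)) = 1"
    using assms unfolding pw_iff by auto
  have "periodic_point a n \<in> {1..d} \<and> R (periodic_point a n) (periodic_point a (Suc n)) = 1" for n
  proof -
    have "n mod length a < length a" using h(1) by simp
    then show ?thesis using h(2)[of "n mod length a"] unfolding periodic_point_def
      by (simp add: mod_Suc_eq)
  qed
  then show ?thesis unfolding SFT_def by auto
qed

lemma pp_shift: "a \<noteq> [] \<Longrightarrow> (shift^^k) (periodic_point a) = (shift^^(k mod length a)) (periodic_point a)"
  by (simp add: shift_pow periodic_point_def mod_add_right_eq)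

lemma pp_shift_L: "a \<noteq> [] \<Longrightarrow> (shift^^(length a)) (periodic_point a) = periodic_point a"
  using pp_shift[of a "length a"] by simp

lemma sum_rot: fixes g :: "nat \<Rightarrow> real"
  assumes L: "L > 0" shows "(\<Sum>k<L. g ((n + k) mod L)) = (\<Sum>k<L. g k)"
proof (induction n)
  case 0 then show ?case by simp
next
  case (Suc n)
  define h where "h k = g ((n + k) mod L)" for k
  have e1: "(\<Sum>k<Suc L. h k) = h 0 + (\<Sum>k<L. h (Suc k))" by (rule sum.lessThan_Suc_shift)
  have e2: "(\<Sum>k<Suc L. h k) = (\<Sum>k<L. h k) + h L" by simp
  have e3: "h L = h 0" unfolding h_def by simp
  have "(\<Sum>k<L. g ((Suc n + k) mod L)) = (\<Sum>k<L. h (Suc k))" unfolding h_def by simp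
  also have "\<dots> = (\<Sum>k<L. h k)" using e1 e2 e3 by linarith
  finally show ?case using Suc.IH unfolding h_def by simp
qed

lemma orbit_bound:
  assumes ne: "a \<noteq> []"
    and b: "\<And>k. k < length a \<Longrightarrow> \<bar>F ((shift^^k) (periodic_point a)) - G ((shift^^k) (periodic_point a))\<bar> \<le> K"
  shows "\<bar>orbit_integral a F - orbit_integral a G\<bar> \<le> K"
proof -
  let ?L = "length a" let ?p = "periodic_point a"
  define S where "S = (\<Sum>k<?L. F ((shift^^k) ?p) - G ((shift^^k) ?p))"
  have L: "real ?L > 0" using ne by simp
  have eq: "orbit_integral a F - orbit_integral a G = S / real ?L"
    unfolding orbit_integral_def S_def by (simp add: sum_subtractf diff_divide_distrib)
  have s1: "\<bar>S\<bar> \<le> (\<Sum>k<?L. \<bar>F ((shift^^k) ?p) - G ((shift^^k) ?p)\<bar>)"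
    unfolding S_def by (rule sum_abs)
  have s2: "(\<Sum>k<?L. \<bar>F ((shift^^k) ?p) - G ((shift^^k) ?p)\<bar>) \<le> (\<Sum>k<?L. K)"
  proof (rule sum_mono)
    fix k assume "k \<in> {..<?L}"
    then have "k < ?L" by simp
    then show "\<bar>F ((shift^^k) ?p) - G ((shift^^k) ?p)\<bar> \<le> K" by (rule b)
  qed
  have s3: "(\<Sum>k<?L. K) = real ?L * K" by simp
  have "\<bar>S\<bar> \<le> real ?L * K" using s1 s2 s3 by linarith
  then have "\<bar>S\<bar> / real ?L \<le> K" using L by (simp add: divide_le_eq mult.commute)
  moreover have "\<bar>S / real ?L\<bar> = \<bar>S\<bar> / real ?L" by (simp add: abs_divide)
  ultimately show ?thesis unfolding eq by linarith
qed

lemma orbit_const: "a \<noteq> [] \<Longrightarrow> orbit_integral a (\<lambda>_. c) = c"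
  unfolding orbit_integral_def by simp

lemma orbit_quasi:
  assumes pw: "periodic_word d R a"
    and q: "\<And>n m x. n\<ge>1 \<Longrightarrow> m\<ge>1 \<Longrightarrow> x \<in> SFT d R \<Longrightarrow> \<bar>G (n+m) x - G n x - G m ((shift^^n) x)\<bar> \<le> C"
    and nm: "n \<ge> 1" "m \<ge> 1"
  shows "\<bar>orbit_integral a (G (n+m)) - orbit_integral a (G n) - orbit_integral a (G m)\<bar> \<le> C"
proof -
  let ?L = "length a" let ?p = "periodic_point a"
  have ne: "a \<noteq> []" using pw unfolding periodic_word_def by blast
  have L: "?L > 0" using ne by simp
  have pS: "?p \<in> SFT d R" using pp_SFT[OF pw] .
  have rot: "(\<Sum>k<?L. G m ((shift^^n) ((shift^^k) ?p))) = (\<Sum>k<?L. G m ((shift^^k) ?p))"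
  proof -
    have "(shift^^n) ((shift^^k) ?p) = (shift^^((n+k) mod ?L)) ?p" for k
    proof -
      have "(shift^^n) ((shift^^k) ?p) = (shift^^(n+k)) ?p" by (simp add: funpow_add)
      also have "\<dots> = (shift^^((n+k) mod ?L)) ?p" by (rule pp_shift[OF ne])
      finally show ?thesis .
    qed
    then have "(\<Sum>k<?L. G m ((shift^^n) ((shift^^k) ?p))) = (\<Sum>k<?L. (\<lambda>j. G m ((shift^^j) ?p)) ((n+k) mod ?L))"
      by simp
    also have "\<dots> = (\<Sum>k<?L. G m ((shift^^k) ?p))" using sum_rot[OF L, of "\<lambda>j. G m ((shift^^j) ?p)" n] by simp
    finally show ?thesis .
  qed
  have e1: "orbit_integral a (G m) = orbit_integral a (\<lambda>x. G m ((shift^^n) x))"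
    unfolding orbit_integral_def using rot by simp
  have e2: "orbit_integral a (\<lambda>x. G (n+m) x - G n x - G m ((shift^^n) x))
     = orbit_integral a (G (n+m)) - orbit_integral a (G n) - orbit_integral a (\<lambda>x. G m ((shift^^n) x))"
    unfolding orbit_integral_def by (simp only: sum_subtractf diff_divide_distrib)
  have e3: "orbit_integral a (\<lambda>_. 0) = 0" by (rule orbit_const[OF ne])
  have bnd: "\<bar>orbit_integral a (\<lambda>x. G (n+m) x - G n x - G m ((shift^^n) x)) - orbit_integral a (\<lambda>_. 0)\<bar> \<le> C"
  proof (rule orbit_bound[OF ne])
    fix k assume "k < length a"
    have "(shift^^k) ?p \<in> SFT d R" by (rule SFT_shift[OF pS])
    from q[OF nm this]
    show "\<bar>(\<lambda>x. G (n+m) x - G n x - G m ((shift^^n) x)) ((shift^^k) ?p) - (\<lambda>_. 0) ((shift^^k) ?p)\<bar> \<le> C"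
      by (simp only: diff_0_right)
  qed
  have eq: "orbit_integral a (G (n+m)) - orbit_integral a (G n) - orbit_integral a (G m)
     = orbit_integral a (\<lambda>x. G (n+m) x - G n x - G m ((shift^^n) x)) - orbit_integral a (\<lambda>_. 0)"
    using e1 e2 e3 by linarith
  show ?thesis unfolding eq by (rule bnd)
qed

lemma avg_lim:
  assumes pw: "periodic_word d R a"
    and q: "\<And>n m x. n\<ge>1 \<Longrightarrow> m\<ge>1 \<Longrightarrow> x \<in> SFT d R \<Longrightarrow> \<bar>G (n+m) x - G n x - G m ((shift^^n) x)\<bar> \<le> C"
  shows "\<forall>n\<ge>1. \<bar>orbit_integral a (G n) - real n * periodic_average a G\<bar> \<le> C"
proof -
  obtain l where l: "(\<lambda>n. orbit_integral a (G n) / real n) \<longlonglongrightarrow> l"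
    and b: "\<forall>n\<ge>1. \<bar>orbit_integral a (G n) - real n * l\<bar> \<le> C"
  proof -
    have "\<exists>l. (\<lambda>n. orbit_integral a (G n) / real n) \<longlonglongrightarrow> l \<and> (\<forall>n\<ge>1. \<bar>orbit_integral a (G n) - real n * l\<bar> \<le> C)"
    proof (rule quasi_add_lim)
      fix n m :: nat assume "n \<ge> 1" "m \<ge> 1"
      then show "\<bar>orbit_integral a (G (n+m)) - orbit_integral a (G n) - orbit_integral a (G m)\<bar> \<le> C"
        using orbit_quasi[of d R a G C, OF pw q] by blast
    qed
    then show ?thesis using that by blast
  qed
  have "periodic_average a G = l" unfolding periodic_average_def using l by (rule limI)
  then show ?thesis using b by simp
qed

lemma path_exists:
  assumes "mpow d R m i j > 0" "i \<in> {1..d}" "j \<in> {1..d}"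
  shows "\<exists>w. w 0 = i \<and> w m = j \<and> (\<forall>t\<le>m. w t \<in> {1..d}) \<and> (\<forall>t<m. R (w t) (w (Suc t)) > 0)"
  using assms
proof (induction m arbitrary: j)
  case 0
  then have "i = j" by (simp split: if_splits)
  then show ?case using 0 by (intro exI[of _ "\<lambda>_. i"]) auto
next
  case (Suc m)
  have "\<exists>k\<in>{1..d}. mpow d R m i k * R k j > 0"
  proof (rule ccontr)
    assume "\<not> ?thesis"
    then have "\<forall>k\<in>{1..d}. mpow d R m i k * R k j = 0" by auto
    then have "(\<Sum>k\<in>{1..d}. mpow d R m i k * R k j) = 0" by (intro sum.neutral) blast
    then have "mpow d R (Suc m) i j = 0" by simp
    then show False using Suc.prems(1) by (simp del: mpow.simps)
  qed
  then obtain k where k: "k \<in> {1..d}" "mpow d R m i k * R k j > 0" by blast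
  then obtain w where w: "w 0 = i" "w m = k" "\<forall>t\<le>m. w t \<in> {1..d}" "\<forall>t<m. R (w t) (w (Suc t)) > 0"
    using Suc.IH[of k] Suc.prems by auto
  define w' where "w' = w(Suc m := j)"
  have "w' 0 = i" "w' (Suc m) = j" using w unfolding w'_def by auto
  moreover have "\<forall>t\<le>Suc m. w' t \<in> {1..d}" using w Suc.prems unfolding w'_def by (auto simp: le_Suc_eq)
  moreover have "\<forall>t<Suc m. R (w' t) (w' (Suc t)) > 0"
    using w k unfolding w'_def by (auto simp: less_Suc_eq)
  ultimately show ?case by blast
qed



lemma abs_sub2: fixes a b c e :: real shows "\<bar>a\<bar> \<le> c \<Longrightarrow> \<bar>b\<bar> \<le> e \<Longrightarrow> \<bar>a - b\<bar> \<le> c + e"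
  by (simp add: abs_le_iff)

theorem mainTheorem8:
  fixes d :: nat and R :: "nat \<Rightarrow> nat \<Rightarrow> nat"
    and B B' :: "nat \<Rightarrow> (nat \<Rightarrow> nat) \<Rightarrow> real"
  assumes "d \<ge> 1"
    and "zero_one_matrix d R" and "irreducible_mat d R" and "aperiodic_mat d R"
    and "bowen_quasicocycle d R B" and "bowen_quasicocycle d R B'"
  shows "cohomologous d R B B' \<longleftrightarrow>
    (\<forall>a. periodic_word d R a \<longrightarrow> periodic_average a B = periodic_average a B')"
proof -
  from assms(5) obtain CB VB where
    mB: "\<forall>n\<ge>1. \<exists>M. \<forall>x\<in>SFT d R. \<bar>B n x\<bar> \<le> M" and
    qB0: "\<forall>n\<ge>1. \<forall>m\<ge>1. \<forall>x\<in>SFT d R. \<bar>B (n + m) x - B n x - B m ((shift ^^ n) x)\<bar> \<le> CB" and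
    vB: "\<forall>n\<ge>1. \<forall>x\<in>SFT d R. \<forall>y\<in>SFT d R. (\<forall>k<n. x k = y k) \<longrightarrow> \<bar>B n x - B n y\<bar> \<le> VB"
    unfolding bowen_quasicocycle_def by blast
  from assms(6) obtain CB' VB' where
    mB': "\<forall>n\<ge>1. \<exists>M. \<forall>x\<in>SFT d R. \<bar>B' n x\<bar> \<le> M" and
    qB0': "\<forall>n\<ge>1. \<forall>m\<ge>1. \<forall>x\<in>SFT d R. \<bar>B' (n + m) x - B' n x - B' m ((shift ^^ n) x)\<bar> \<le> CB'" and
    vB': "\<forall>n\<ge>1. \<forall>x\<in>SFT d R. \<forall>y\<in>SFT d R. (\<forall>k<n. x k = y k) \<longrightarrow> \<bar>B' n x - B' n y\<bar> \<le> VB'"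
    unfolding bowen_quasicocycle_def by blast
  have qB: "\<And>n m x. n\<ge>1 \<Longrightarrow> m\<ge>1 \<Longrightarrow> x \<in> SFT d R \<Longrightarrow> \<bar>B (n+m) x - B n x - B m ((shift^^n) x)\<bar> \<le> CB"
    using qB0 by blast
  have qB': "\<And>n m x. n\<ge>1 \<Longrightarrow> m\<ge>1 \<Longrightarrow> x \<in> SFT d R \<Longrightarrow> \<bar>B' (n+m) x - B' n x - B' m ((shift^^n) x)\<bar> \<le> CB'"
    using qB0' by blast
  have avB: "\<forall>n\<ge>1. \<bar>orbit_integral a (B n) - real n * periodic_average a B\<bar> \<le> CB"
    if "periodic_word d R a" for a
    by (rule avg_lim[of d R a B CB, OF that qB])
  have avB': "\<forall>n\<ge>1. \<bar>orbit_integral a (B' n) - real n * periodic_average a B'\<bar> \<le> CB'"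
    if "periodic_word d R a" for a
    by (rule avg_lim[of d R a B' CB', OF that qB'])
  show ?thesis
  proof
    assume "cohomologous d R B B'"
    then obtain C0 where c0: "\<forall>n\<ge>1. \<forall>x\<in>SFT d R. \<bar>B n x - B' n x\<bar> \<le> C0"
      unfolding cohomologous_def by blast
    show "\<forall>a. periodic_word d R a \<longrightarrow> periodic_average a B = periodic_average a B'"
    proof (intro allI impI)
      fix a assume pw: "periodic_word d R a"
      have ne: "a \<noteq> []" using pw unfolding periodic_word_def by blast
      have pS: "periodic_point a \<in> SFT d R" by (rule pp_SFT[OF pw])
      define lB where "lB = periodic_average a B"
      define lB' where "lB' = periodic_average a B'"
      define K where "K = CB + CB' + C0"
      have bnd: "real n * \<bar>lB - lB'\<bar> \<le> K" if n: "n \<ge> 1" for n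
      proof -
        have "\<bar>orbit_integral a (B n) - orbit_integral a (B' n)\<bar> \<le> C0"
        proof (rule orbit_bound[OF ne])
          fix k assume "k < length a"
          have "(shift^^k) (periodic_point a) \<in> SFT d R" by (rule SFT_shift[OF pS])
          then show "\<bar>B n ((shift^^k) (periodic_point a)) - B' n ((shift^^k) (periodic_point a))\<bar> \<le> C0"
            using c0 n by blast
        qed
        moreover have "\<bar>orbit_integral a (B n) - real n * lB\<bar> \<le> CB" using avB[OF pw] n unfolding lB_def by blast
        moreover have "\<bar>orbit_integral a (B' n) - real n * lB'\<bar> \<le> CB'" using avB'[OF pw] n unfolding lB'_def by blast
        ultimately have "\<bar>real n * lB - real n * lB'\<bar> \<le> K" unfolding K_def by (simp add: abs_le_iff) 
        moreover have "\<bar>real n * lB - real n * lB'\<bar> = real n * \<bar>lB - lB'\<bar>"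
          by (metis abs_mult abs_of_nat right_diff_distrib)
        ultimately show ?thesis by simp
      qed
      show "periodic_average a B = periodic_average a B'"
      proof (rule ccontr)
        assume "periodic_average a B \<noteq> periodic_average a B'"
        then have dpos: "\<bar>lB - lB'\<bar> > 0" unfolding lB_def lB'_def by simp
        define n where "n = nat \<lceil>K / \<bar>lB - lB'\<bar>\<rceil> + 1"
        have n1: "n \<ge> 1" unfolding n_def by simp
        have "K / \<bar>lB - lB'\<bar> < real n" unfolding n_def using of_nat_ceiling[of "K / \<bar>lB - lB'\<bar>"] by simp
        then have "K < real n * \<bar>lB - lB'\<bar>" using dpos by (simp add: divide_less_eq)
        then show False using bnd[OF n1] by simp
      qed
    qed
  next
    assume H: "\<forall>a. periodic_word d R a \<longrightarrow> periodic_average a B = periodic_average a B'"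
    define D where "D n x = B n x - B' n x" for n x
    define CD where "CD = CB + CB'"
    have qD: "\<bar>D (n+m) x - D n x - D m ((shift^^n) x)\<bar> \<le> CD"
      if "n\<ge>1" "m\<ge>1" "x \<in> SFT d R" for n m x
    proof -
      have "D (n+m) x - D n x - D m ((shift^^n) x) =
        (B (n+m) x - B n x - B m ((shift^^n) x)) - (B' (n+m) x - B' n x - B' m ((shift^^n) x))"
        unfolding D_def by simp
      then show ?thesis unfolding CD_def using abs_sub2[OF qB[OF that] qB'[OF that]] by simp
    qed
    have step1: "\<bar>D (length a) (periodic_point a)\<bar> \<le> CB + CB' + 2*CD" if pw: "periodic_word d R a" for a
    proof -
      let ?L = "length a" let ?p = "periodic_point a"
      have ne: "a \<noteq> []" using pw unfolding periodic_word_def by blast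
      have L1: "?L \<ge> 1" using ne by (simp add: Suc_le_eq)
      have pS: "?p \<in> SFT d R" by (rule pp_SFT[OF pw])
      have pL: "(shift^^?L) ?p = ?p" by (rule pp_shift_L[OF ne])
      have CD0: "CD \<ge> 0" using qD[of 1 1 ?p] pS by (meson abs_ge_zero order_trans order_refl)
      have e1: "\<bar>orbit_integral a (B ?L) - real ?L * periodic_average a B\<bar> \<le> CB" using avB[OF pw] L1 by blast
      have e2: "\<bar>orbit_integral a (B' ?L) - real ?L * periodic_average a B'\<bar> \<le> CB'" using avB'[OF pw] L1 by blast
      have eqa: "periodic_average a B = periodic_average a B'" using H pw by blast
      have e3: "orbit_integral a (D ?L) = orbit_integral a (B ?L) - orbit_integral a (B' ?L)"
        unfolding orbit_integral_def D_def by (simp add: sum_subtractf diff_divide_distrib)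
      have f1: "\<bar>orbit_integral a (D ?L)\<bar> \<le> CB + CB'"
        using e1 e2 e3 eqa by (simp add: abs_le_iff)
      have f2: "\<bar>orbit_integral a (D ?L) - orbit_integral a (\<lambda>_. D ?L ?p)\<bar> \<le> 2*CD"
      proof (rule orbit_bound[OF ne])
        fix k assume k: "k < ?L"
        show "\<bar>D ?L ((shift^^k) ?p) - D ?L ?p\<bar> \<le> 2*CD"
        proof (cases "k = 0")
          case True then show ?thesis using CD0 by simp
        next
          case False
          then have k1: "k \<ge> 1" by simp
          have a1: "\<bar>D (?L+k) ?p - D ?L ?p - D k ?p\<bar> \<le> CD" using qD[OF L1 k1 pS] pL by simp
          have a2: "\<bar>D (k+?L) ?p - D k ?p - D ?L ((shift^^k) ?p)\<bar> \<le> CD" using qD[OF k1 L1 pS] .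
          from a2 have a3: "\<bar>D (?L+k) ?p - D k ?p - D ?L ((shift^^k) ?p)\<bar> \<le> CD"
            by (simp only: add.commute[of k "length a"])
          show ?thesis using a1 a3 by (auto simp: abs_le_iff)
        qed
      qed
      have "orbit_integral a (\<lambda>_. D ?L ?p) = D ?L ?p" by (rule orbit_const[OF ne])
      then show ?thesis using f1 f2 by (simp add: abs_le_iff)
    qed
    have "\<forall>m. \<exists>M. m \<ge> 1 \<longrightarrow> (\<forall>y\<in>SFT d R. \<bar>D m y\<bar> \<le> M)"
    proof
      fix m
      show "\<exists>M. m \<ge> 1 \<longrightarrow> (\<forall>y\<in>SFT d R. \<bar>D m y\<bar> \<le> M)"
      proof (cases "m \<ge> 1")
        case True
        obtain M1 where M1: "\<forall>x\<in>SFT d R. \<bar>B m x\<bar> \<le> M1" using mB True by blast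
        obtain M2 where M2: "\<forall>x\<in>SFT d R. \<bar>B' m x\<bar> \<le> M2" using mB' True by blast
        have "\<forall>y\<in>SFT d R. \<bar>D m y\<bar> \<le> M1 + M2"
          unfolding D_def using M1 M2 abs_sub2 by blast
        then show ?thesis by blast
      qed simp
    qed
    then obtain bd where bd: "\<And>m y. m \<ge> 1 \<Longrightarrow> y \<in> SFT d R \<Longrightarrow> \<bar>D m y\<bar> \<le> bd m" by metis
    have "\<forall>i j. \<exists>n. i \<in> {1..d} \<longrightarrow> j \<in> {1..d} \<longrightarrow> n > 0 \<and> mpow d R n i j > 0"
      using assms(3) unfolding irreducible_mat_def by blast
    then obtain mm where mm: "\<And>i j. i \<in> {1..d} \<Longrightarrow> j \<in> {1..d} \<Longrightarrow> mm i j > 0 \<and> mpow d R (mm i j) i j > 0"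
      by metis
    define Kb where "Kb = (\<Sum>i\<in>{1..d}. \<Sum>j\<in>{1..d}. \<bar>bd (mm i j)\<bar>)"
    have Kb: "\<bar>bd (mm i j)\<bar> \<le> Kb" if "i \<in> {1..d}" "j \<in> {1..d}" for i j
    proof -
      have "\<bar>bd (mm i j)\<bar> \<le> (\<Sum>j\<in>{1..d}. \<bar>bd (mm i j)\<bar>)"
        by (rule member_le_sum) (use that in auto)
      also have "\<dots> \<le> Kb" unfolding Kb_def
        by (rule member_le_sum) (use that in \<open>auto intro: sum_nonneg\<close>)
      finally show ?thesis .
    qed
    show "cohomologous d R B B'"
      unfolding cohomologous_def
    proof (intro exI allI impI ballI)
      fix n :: nat and x assume n1: "n \<ge> 1" and xS: "x \<in> SFT d R"
      have xd: "\<And>t. x t \<in> {1..d}" and xR: "\<And>t. R (x t) (x (Suc t)) = 1"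
        using xS unfolding SFT_def by auto
      define m where "m = mm (x n) (x 0)"
      have m: "m > 0" "mpow d R m (x n) (x 0) > 0" using mm[OF xd xd] unfolding m_def by auto
      obtain w where w0: "w 0 = x n" and wm: "w m = x 0" and wd: "\<forall>t\<le>m. w t \<in> {1..d}"
        and wR: "\<forall>t<m. R (w t) (w (Suc t)) > 0"
        using path_exists[OF m(2) xd xd] by blast
      have R01: "R i j = 1" if "i \<in> {1..d}" "j \<in> {1..d}" "R i j > 0" for i j
        using assms(2) that unfolding zero_one_matrix_def by fastforce
      define q where "q t = (if t < n then x t else w (t - n))" for t
      define a where "a = map q [0..<n+m]"
      have la: "length a = n + m" unfolding a_def by simp
      have an: "a ! t = q t" if "t < n + m" for t unfolding a_def using that by simp
      have qd: "q t \<in> {1..d}" if "t < n + m" for t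
        unfolding q_def using xd wd that by auto
      have qL: "q (n+m) = q 0" unfolding q_def using n1 wm by simp
      have qR: "R (q t) (q (Suc t)) = 1" if t: "t < n + m" for t
      proof (cases "Suc t < n")
        case True then show ?thesis unfolding q_def using xR by simp
      next
        case False
        show ?thesis
        proof (cases "t < n")
          case True
          then have "Suc t = n" using False by simp
          then show ?thesis unfolding q_def using True xR[of t] w0 by simp
        next
          case tn: False
          then have tm: "t - n < m" using t by simp
          have "q t = w (t - n)" "q (Suc t) = w (Suc (t - n))" unfolding q_def using tn by (auto simp: Suc_diff_le)
          moreover have "w (t - n) \<in> {1..d}" "w (Suc (t - n)) \<in> {1..d}" using wd tm by auto
          moreover have "R (w (t - n)) (w (Suc (t - n))) > 0" using wR tm by blast
          ultimately show ?thesis using R01 by simp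
        qed
      qed
      have qmod: "q (Suc t mod (n+m)) = q (Suc t)" if "t < n + m" for t
      proof (cases "Suc t < n + m")
        case True then show ?thesis by simp
      next
        case False then have "Suc t = n + m" using that by simp
        then show ?thesis using qL by simp
      qed
      have pw: "periodic_word d R a"
        unfolding pw_iff
      proof
        show "a \<noteq> []" using la m(1) by auto
        show "\<forall>i<length a. a ! i \<in> {1..d} \<and> R (a ! i) (a ! (Suc i mod length a)) = 1"
        proof (intro allI impI conjI)
          fix i assume i: "i < length a"
          then show "a ! i \<in> {1..d}" using an qd la by simp
          have "Suc i mod length a < n + m" using la m(1) by simp
          then have "a ! (Suc i mod length a) = q (Suc i)" using an qmod i la by simp
          then show "R (a ! i) (a ! (Suc i mod length a)) = 1" using an qR i la by simp
        qed
      qed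
      let ?p = "periodic_point a"
      have pS: "?p \<in> SFT d R" by (rule pp_SFT[OF pw])
      have px: "\<forall>k<n. x k = ?p k"
      proof (intro allI impI)
        fix k assume "k < n"
        then have "k mod (n+m) = k" "k < n + m" by auto
        then show "x k = ?p k" unfolding periodic_point_def la using an \<open>k < n\<close> unfolding q_def by simp
      qed
      have v1: "\<bar>B n x - B n ?p\<bar> \<le> VB" using vB n1 xS pS px by blast
      have v2: "\<bar>B' n x - B' n ?p\<bar> \<le> VB'" using vB' n1 xS pS px by blast
      have m1: "m \<ge> 1" using m(1) by simp
      have c1: "\<bar>D (n+m) ?p - D n ?p - D m ((shift^^n) ?p)\<bar> \<le> CD" by (rule qD[OF n1 m1 pS])
      have c2: "\<bar>D m ((shift^^n) ?p)\<bar> \<le> Kb"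
      proof -
        have "\<bar>D m ((shift^^n) ?p)\<bar> \<le> bd m" by (rule bd[OF m1 SFT_shift[OF pS]])
        also have "\<dots> \<le> \<bar>bd m\<bar>" by simp
        also have "\<dots> \<le> Kb" unfolding m_def by (rule Kb[OF xd xd])
        finally show ?thesis .
      qed
      have c3: "\<bar>D (n+m) ?p\<bar> \<le> CB + CB' + 2*CD" using step1[OF pw] la by simp
      have "\<bar>D n x\<bar> \<le> (VB + VB') + CD + Kb + (CB + CB' + 2*CD)"
        using v1 v2 c1 c2 c3 unfolding D_def by (auto simp: abs_le_iff)
      then show "\<bar>B n x - B' n x\<bar> \<le> (VB + VB') + CD + Kb + (CB + CB' + 2*CD)"
        unfolding D_def .
    qed
  qed
qed

end
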